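(* Let $\mathcal{O}$ be a cube orientation. If $\mathcal{O}$ has property L (i.e., every L-graph $\mathcal{L}_{\mathcal{O}}(V)$, $V\in\mathrm{vert}\,\mathcal{O}$, is acyclic), then $\mathcal{O}$ is a unique sink orientation.
   Context: For sets $U,V$ let $U\oplus V=(U\cup V)\setminus(U\cap V)$, and for $U\subseteq W$ let $[U,W]=\{V: U\subseteq V\subseteq W\}$. A cube orientation is a directed graph $\mathcal{O}$ with vertex set $\mathrm{vert}\,\mathcal{O}=[U,W]$ for some $U\subseteq W$ which, for every $V\in[U,W]$ and every $i\in W\setminus U$ (the carrier), contains exactly one of the directed edges $(V,V\oplus\{i\})$ and $(V\oplus\{i\},V)$. Its outmap is $\phi_{\mathcal{O}}(V)=\{i\in W\setminus U: (V,V\oplus\{i\})\in\mathcal{O}\}$. For $V\in[U,W]$, the L-graph $\mathcal{L}_{\mathcal{O}}(V)$ is the directed graph with vertex set $W\setminus V$ and an arc $(i,j)$ for distinct $i,j\in W\setminus V$ whenever $j\in\phi_{\mathcal{O}}(V)\oplus\phi_{\mathcal{O}}(V\cup\{i\})$. $\mathcal{O}$ has property L if all its L-graphs are acyclic. A face of $\mathcal{O}$ is the subgraph induced by an interval contained in $\mathrm{vert}\,\mathcal{O}$; $\mathcal{O}$ is a unique sink orientation (USO) if every face has exactly one sink (vertex with no outgoing edge in the face). *)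

theory Defs
  imports Main
begin

definition symdiff :: "'a set \<Rightarrow> 'a set \<Rightarrow> 'a set" (infixl "\<ominus>" 65) where
  "symdiff U V = (U \<union> V) - (U \<inter> V)"

definition interval :: "'a set \<Rightarrow> 'a set \<Rightarrow> 'a set set" where
  "interval U W = {V. U \<subseteq> V \<and> V \<subseteq> W}"

definition cube_orientation :: "('a set \<times> 'a set) set \<Rightarrow> 'a set \<Rightarrow> 'a set \<Rightarrow> bool" where
  "cube_orientation Ori U W \<longleftrightarrow> finite W \<and> U \<subseteq> W \<and>
     Ori \<subseteq> {(V, V \<ominus> {i}) | V i. V \<in> interval U W \<and> i \<in> W - U} \<and>
     (\<forall>V \<in> interval U W. \<forall>i \<in> W - U.
        ((V, V \<ominus> {i}) \<in> Ori) \<noteq> ((V \<ominus> {i}, V) \<in> Ori))"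

definition outmap :: "('a set \<times> 'a set) set \<Rightarrow> 'a set \<Rightarrow> 'a set \<Rightarrow> 'a set \<Rightarrow> 'a set" where
  "outmap Ori U W V = {i \<in> W - U. (V, V \<ominus> {i}) \<in> Ori}"

definition L_graph :: "('a set \<times> 'a set) set \<Rightarrow> 'a set \<Rightarrow> 'a set \<Rightarrow> 'a set \<Rightarrow> ('a \<times> 'a) set" where
  "L_graph Ori U W V = {(i, j). i \<in> W - V \<and> j \<in> W - V \<and> i \<noteq> j \<and>
      j \<in> outmap Ori U W V \<ominus> outmap Ori U W (V \<union> {i})}"

definition property_L :: "('a set \<times> 'a set) set \<Rightarrow> 'a set \<Rightarrow> 'a set \<Rightarrow> bool" where
  "property_L Ori U W \<longleftrightarrow> (\<forall>V \<in> interval U W. acyclic (L_graph Ori U W V))"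

definition is_sink_in_face :: "('a set \<times> 'a set) set \<Rightarrow> 'a set \<Rightarrow> 'a set \<Rightarrow> 'a set \<Rightarrow> bool" where
  "is_sink_in_face Ori A B V \<longleftrightarrow> V \<in> interval A B \<and>
     (\<forall>V'. (V, V') \<in> Ori \<longrightarrow> V' \<notin> interval A B)"

definition unique_sink_orientation :: "('a set \<times> 'a set) set \<Rightarrow> 'a set \<Rightarrow> 'a set \<Rightarrow> bool" where
  "unique_sink_orientation Ori U W \<longleftrightarrow>
     (\<forall>A B. interval A B \<noteq> {} \<and> interval A B \<subseteq> interval U W \<longrightarrow>
        (\<exists>!V. is_sink_in_face Ori A B V))"

end

theory Submission
  imports Defs
begin

lemma mem_symdiff[simp]: "x \<in> U \<ominus> V \<longleftrightarrow> (x \<in> U) \<noteq> (x \<in> V)"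
  by (auto simp: symdiff_def)

lemma mem_interval[simp]: "V \<in> interval A B \<longleftrightarrow> A \<subseteq> V \<and> V \<subseteq> B"
  by (simp add: interval_def)

lemma symdiff_twice[simp]: "(V \<ominus> X) \<ominus> X = V"
  by auto

lemma card_interval:
  assumes "finite B" "A \<subseteq> B"
  shows "card (interval A B) = card (Pow (B - A))"
proof -
  have "interval A B = (\<lambda>S. A \<union> S) ` Pow (B - A)"
  proof
    show "interval A B \<subseteq> (\<lambda>S. A \<union> S) ` Pow (B - A)"
    proof
      fix V assume "V \<in> interval A B"
      then have "V = A \<union> (V - A)" "V - A \<in> Pow (B - A)" by auto
      then show "V \<in> (\<lambda>S. A \<union> S) ` Pow (B - A)" by blast
    qed
  qed (use assms in auto)
  moreover have "inj_on (\<lambda>S. A \<union> S) (Pow (B - A))"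
    by (auto simp: inj_on_def)
  ultimately show ?thesis by (simp add: card_image)
qed

lemma inj_onto_Pow:
  assumes "finite B" "A \<subseteq> B" "inj_on f (interval A B)"
    and "\<And>X. f X \<subseteq> B - A"
  shows "f ` interval A B = Pow (B - A)"
proof (rule card_subset_eq)
  show "finite (Pow (B - A))" using assms by simp
  show "f ` interval A B \<subseteq> Pow (B - A)" using assms by auto
  show "card (f ` interval A B) = card (Pow (B - A))"
    using assms card_interval[OF assms(1,2)] by (simp add: card_image)
qed

lemma card_fiber_1:
  assumes "inj_on f S" "T \<in> f ` S"
  shows "card {x\<in>S. f x = T} = 1"
proof -
  obtain x where x: "x \<in> S" "f x = T" using assms by blast
  then have "{x\<in>S. f x = T} = {x}" using assms(1) by (auto simp: inj_on_def)
  then show ?thesis by simp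
qed

context
  fixes Ori :: "('a set \<times> 'a set) set" and U W :: "'a set"
  assumes co: "cube_orientation Ori U W"
    and pL: "property_L Ori U W"
begin

abbreviation "phi X \<equiv> outmap Ori U W X"

lemma finW: "finite W" using co by (simp add: cube_orientation_def)

lemma edge_flip:
  assumes "U \<subseteq> V" "V \<subseteq> W" "i \<in> W - U"
  shows "i \<in> phi V \<ominus> phi (V \<ominus> {i})"
proof -
  have "((V, V \<ominus> {i}) \<in> Ori) \<noteq> ((V \<ominus> {i}, V) \<in> Ori)"
    using co assms by (auto simp: cube_orientation_def)
  then show ?thesis using assms by (auto simp: outmap_def)
qed

lemma L_sink:
  assumes "U \<subseteq> A" "A \<subseteq> B" "B \<subseteq> W" "A \<noteq> B"
  shows "\<exists>t \<in> B - A. \<forall>k \<in> B - A. k \<noteq> t \<longrightarrow> k \<notin> phi A \<ominus> phi (insert t A)"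
proof -
  let ?L = "L_graph Ori U W A"
  have "acyclic ?L" using pL assms by (auto simp: property_L_def)
  moreover have "finite ?L"
  proof (rule finite_subset)
    show "?L \<subseteq> W \<times> W" by (auto simp: L_graph_def)
  qed (use finW in simp)
  ultimately have "wf (?L\<inverse>)" by (rule finite_acyclic_wf_converse[rotated])
  moreover obtain x where "x \<in> B - A" using assms by blast
  ultimately obtain t where t: "t \<in> B - A" "\<forall>y. (y, t) \<in> ?L\<inverse> \<longrightarrow> y \<notin> B - A"
    unfolding wf_eq_minimal by metis
  show ?thesis
  proof (intro bexI[OF _ t(1)] ballI impI)
    fix k assume k: "k \<in> B - A" "k \<noteq> t"
    then have "(t, k) \<notin> ?L" using t by auto
    then show "k \<notin> phi A \<ominus> phi (insert t A)"
      using k t assms by (auto simp: L_graph_def)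
  qed
qed

lemma face_inj:
  "card (B - A) = n \<Longrightarrow> U \<subseteq> A \<Longrightarrow> A \<subseteq> B \<Longrightarrow> B \<subseteq> W \<Longrightarrow>
   inj_on (\<lambda>X. phi X \<inter> (B - A)) (interval A B)"
proof (induction n arbitrary: A B rule: less_induct)
  case (less n A B)
  note UA = \<open>U \<subseteq> A\<close> and AB = \<open>A \<subseteq> B\<close> and BW = \<open>B \<subseteq> W\<close>
  have ih: "inj_on (\<lambda>X. phi X \<inter> (B' - A')) (interval A' B')"
    if "card (B' - A') < n" "U \<subseteq> A'" "A' \<subseteq> B'" "B' \<subseteq> W" for A' B'
    using less.IH that by blast
  have finB: "finite B" using BW finW finite_subset by blast
  define C where "C = B - A"
  define psi where "psi X = phi X \<inter> C" for X
  define I where "I = interval A B"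
  define N where "N T = card {X\<in>I. psi X = T}" for T
  show ?case
  proof (cases "A = B")
    case True
    then show ?thesis by (auto simp: inj_on_def)
  next
    case False
    have cardC: "card C = n" using less.prems C_def by simp
    have finC: "finite C" using finB C_def by simp
    have ltn: "card (C - {s}) < n" if "s \<in> C" for s
      using that finC cardC by (metis card_Diff1_less)
    have psiC: "psi X \<subseteq> C" for X by (auto simp: psi_def)
    have F0: "inj_on (\<lambda>X. psi X - {s}) (interval A (B - {s}))" if "s \<in> C" for s
    proof -
      have e: "(B - {s}) - A = C - {s}" using C_def by auto
      have "inj_on (\<lambda>X. phi X \<inter> ((B - {s}) - A)) (interval A (B - {s}))"
        using ih[of "B - {s}" A] e ltn[OF that] UA AB BW that C_def by auto
      moreover have "phi X \<inter> ((B - {s}) - A) = psi X - {s}" for X using e psi_def by auto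
      ultimately show ?thesis by simp
    qed
    have F1: "inj_on (\<lambda>X. psi X - {s}) (interval (insert s A) B)" if "s \<in> C" for s
    proof -
      have e: "B - insert s A = C - {s}" using C_def by auto
      have "inj_on (\<lambda>X. phi X \<inter> (B - insert s A)) (interval (insert s A) B)"
        using ih[of B "insert s A"] e ltn[OF that] UA AB BW that C_def by auto
      moreover have "phi X \<inter> (B - insert s A) = psi X - {s}" for X using e psi_def by auto
      ultimately show ?thesis by simp
    qed
    have F0s: "(\<lambda>X. psi X - {s}) ` interval A (B - {s}) = Pow (C - {s})" if "s \<in> C" for s
    proof -
      have "(\<lambda>X. psi X - {s}) ` interval A (B - {s}) = Pow ((B - {s}) - A)"
        by (rule inj_onto_Pow) (use finB AB F0[OF that] that C_def psi_def in auto)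
      moreover have "(B - {s}) - A = C - {s}" using C_def by auto
      ultimately show ?thesis by simp
    qed
    have F1s: "(\<lambda>X. psi X - {s}) ` interval (insert s A) B = Pow (C - {s})" if "s \<in> C" for s
    proof -
      have "(\<lambda>X. psi X - {s}) ` interval (insert s A) B = Pow (B - insert s A)"
        by (rule inj_onto_Pow) (use finB AB F1[OF that] that C_def psi_def in auto)
      moreover have "B - insert s A = C - {s}" using C_def by auto
      ultimately show ?thesis by simp
    qed
    have LA: "N T + N (insert s T) = 2" if s: "s \<in> C" and T: "T \<subseteq> C - {s}" for s T
    proof -
      have finI: "finite I" using finB I_def
        by (metis (no_types, lifting) Collect_mono Pow_def finite_Pow_iff interval_def mem_Collect_eq rev_finite_subset)
      have "{X\<in>I. psi X = T} \<union> {X\<in>I. psi X = insert s T} = {X\<in>I. psi X - {s} = T}"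
        using T psiC s by auto
      also have "\<dots> = {X\<in>interval A (B - {s}). psi X - {s} = T} \<union> {X\<in>interval (insert s A) B. psi X - {s} = T}"
        using s C_def I_def by auto
      finally have eq: "{X\<in>I. psi X = T} \<union> {X\<in>I. psi X = insert s T} =
          {X\<in>interval A (B - {s}). psi X - {s} = T} \<union> {X\<in>interval (insert s A) B. psi X - {s} = T}" .
      have c0: "card {X\<in>interval A (B - {s}). psi X - {s} = T} = 1"
        by (rule card_fiber_1[OF F0[OF s]]) (use F0s[OF s] T in auto)
      have c1: "card {X\<in>interval (insert s A) B. psi X - {s} = T} = 1"
        by (rule card_fiber_1[OF F1[OF s]]) (use F1s[OF s] T in auto)
      have "card ({X\<in>interval A (B - {s}). psi X - {s} = T} \<union> {X\<in>interval (insert s A) B. psi X - {s} = T}) = 2"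
        using c0 c1 by (subst card_Un_disjoint) (auto intro: card_ge_0_finite)
      then have "card ({X\<in>I. psi X = T} \<union> {X\<in>I. psi X = insert s T}) = 2" using eq by simp
      moreover have "card ({X\<in>I. psi X = T} \<union> {X\<in>I. psi X = insert s T}) = N T + N (insert s T)"
        unfolding N_def using T s finI by (subst card_Un_disjoint) auto
      ultimately show ?thesis by simp
    qed
    have propg: "N (T \<ominus> {s}) = 1" if "N T = 1" "T \<subseteq> C" "s \<in> C" for T s
    proof (cases "s \<in> T")
      case True
      have "N (T - {s}) + N (insert s (T - {s})) = 2" using LA[of s "T - {s}"] that by blast
      moreover have "insert s (T - {s}) = T" "T \<ominus> {s} = T - {s}" using True by auto
      ultimately show ?thesis using that by simp
    next
      case False
      have "N T + N (insert s T) = 2" using LA[of s T] that False by blast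
      moreover have "T \<ominus> {s} = insert s T" using False by auto
      ultimately show ?thesis using that by simp
    qed
    have all1: "N (T0 \<ominus> S) = 1" if "N T0 = 1" "T0 \<subseteq> C" "S \<subseteq> C" for T0 S
    proof -
      have "finite S" using that finC finite_subset by blast
      then show ?thesis using that(3)
      proof (induction S rule: finite_induct)
        case empty
        have "T0 \<ominus> {} = T0" by auto
        then show ?case using that by simp
      next
        case (insert s S)
        have "N ((T0 \<ominus> S) \<ominus> {s}) = 1"
          by (rule propg) (use insert that in auto)
        moreover have "(T0 \<ominus> S) \<ominus> {s} = T0 \<ominus> insert s S" using insert by auto
        ultimately show ?case by simp
      qed
    qed
    have minmax: "psi A \<noteq> psi B"
    proof -
      obtain t where t: "t \<in> B - A" and nt: "\<forall>k \<in> B - A. k \<noteq> t \<longrightarrow> k \<notin> phi A \<ominus> phi (insert t A)"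
        using L_sink[OF UA AB BW False] by blast
      show ?thesis
      proof (cases "insert t A = B")
        case True
        have "t \<in> phi A \<ominus> phi (A \<ominus> {t})"
          by (rule edge_flip) (use UA AB BW t finW in auto)
        moreover have "A \<ominus> {t} = B" using True t by auto
        ultimately have "t \<in> psi A \<ominus> psi B" using t C_def psi_def by auto
        then show ?thesis by auto
      next
        case ne: False
        have "inj_on (\<lambda>X. phi X \<inter> (B - insert t A)) (interval (insert t A) B)"
          by (rule ih) (use ltn[of t] t C_def UA AB BW in auto)
        moreover have "insert t A \<in> interval (insert t A) B" "B \<in> interval (insert t A) B"
          using t AB by auto
        ultimately have "phi (insert t A) \<inter> (B - insert t A) \<noteq> phi B \<inter> (B - insert t A)"
          using ne unfolding inj_on_def by blast
        then obtain k where k: "k \<in> B - insert t A" "k \<in> phi (insert t A) \<ominus> phi B" by auto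
        then have "k \<notin> phi A \<ominus> phi (insert t A)" using nt by auto
        then have "k \<in> psi A \<ominus> psi B" using k C_def psi_def by auto
        then show ?thesis by auto
      qed
    qed
    have NA: "N (psi A) = 1"
    proof -
      have "{X\<in>I. psi X = psi A} = {A}"
      proof (intro equalityI subsetI)
        fix X assume X: "X \<in> {X\<in>I. psi X = psi A}"
        then have XI: "A \<subseteq> X" "X \<subseteq> B" "psi X = psi A" using I_def by auto
        show "X \<in> {A}"
        proof (cases "X = B")
          case True then show ?thesis using XI minmax by simp
        next
          case False
          then obtain j where j: "j \<in> B" "j \<notin> X" using XI by blast
          then have jC: "j \<in> C" using XI C_def by auto
          have "A \<in> interval A (B - {j})" "X \<in> interval A (B - {j})" using XI j AB by auto
          then have "X = A" using F0[OF jC] XI by (auto simp: inj_on_def)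
          then show ?thesis by simp
        qed
      qed (use I_def AB in auto)
      then show ?thesis unfolding N_def by simp
    qed
    show ?thesis
    proof (rule inj_onI)
      fix X Y assume XY: "X \<in> interval A B" "Y \<in> interval A B"
        "phi X \<inter> (B - A) = phi Y \<inter> (B - A)"
      have T: "psi A \<ominus> (psi A \<ominus> psi X) = psi X" by auto
      have "N (psi A \<ominus> (psi A \<ominus> psi X)) = 1"
        by (rule all1) (use NA psiC in \<open>auto simp: psi_def\<close>)
      then have c: "card {Z\<in>I. psi Z = psi X} = 1" using T N_def by simp
      have "X \<in> {Z\<in>I. psi Z = psi X}" "Y \<in> {Z\<in>I. psi Z = psi X}"
        using XY I_def psi_def C_def by auto
      then show "X = Y" using c by (metis card_1_singletonE singletonD)
    qed
  qed
qed

lemma face_inj':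
  "U \<subseteq> A \<Longrightarrow> A \<subseteq> B \<Longrightarrow> B \<subseteq> W \<Longrightarrow>
   inj_on (\<lambda>X. phi X \<inter> (B - A)) (interval A B)"
  using face_inj by blast

lemma sink_iff:
  assumes "U \<subseteq> A" "A \<subseteq> B" "B \<subseteq> W" "V \<in> interval A B"
  shows "is_sink_in_face Ori A B V \<longleftrightarrow> phi V \<inter> (B - A) = {}"
proof
  assume S: "is_sink_in_face Ori A B V"
  show "phi V \<inter> (B - A) = {}"
  proof (rule ccontr)
    assume "phi V \<inter> (B - A) \<noteq> {}"
    then obtain i where i: "i \<in> B - A" "(V, V \<ominus> {i}) \<in> Ori" by (auto simp: outmap_def)
    moreover have "V \<ominus> {i} \<in> interval A B" using i assms by auto
    ultimately show False using S by (auto simp: is_sink_in_face_def)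
  qed
next
  assume E: "phi V \<inter> (B - A) = {}"
  show "is_sink_in_face Ori A B V"
    unfolding is_sink_in_face_def
  proof (intro conjI allI impI)
    show "V \<in> interval A B" by fact
    fix V' assume e: "(V, V') \<in> Ori"
    then obtain i where i: "V' = V \<ominus> {i}" "i \<in> W - U"
      using co by (auto simp: cube_orientation_def)
    show "V' \<notin> interval A B"
    proof
      assume "V' \<in> interval A B"
      then have "A \<subseteq> V'" "V' \<subseteq> B" by auto
      moreover have "i \<in> V \<or> i \<in> V'" "i \<notin> V \<or> i \<notin> V'" using i by auto
      ultimately have "i \<in> B - A" using assms by auto
      moreover have "i \<in> phi V" using e i by (auto simp: outmap_def)
      ultimately show False using E by auto
    qed
  qed
qed


end

theorem theorem3p3:
  fixes Ori :: "('a set \<times> 'a set) set" and U W :: "'a set"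
  assumes "cube_orientation Ori U W"
    and "property_L Ori U W"
  shows "unique_sink_orientation Ori U W"
  unfolding unique_sink_orientation_def
proof (intro allI impI)
  fix A B assume h: "interval A B \<noteq> {} \<and> interval A B \<subseteq> interval U W"
  then obtain X where "X \<in> interval A B" by blast
  then have AB: "A \<subseteq> B" by auto
  then have "A \<in> interval A B" "B \<in> interval A B" by auto
  then have "A \<in> interval U W" "B \<in> interval U W" using h by blast+
  then have UA: "U \<subseteq> A" and BW: "B \<subseteq> W" by auto
  have finB: "finite B" using BW finW[OF assms] finite_subset by blast
  have inj: "inj_on (\<lambda>X. outmap Ori U W X \<inter> (B - A)) (interval A B)"
    using face_inj'[OF assms UA AB BW] .
  have "(\<lambda>X. outmap Ori U W X \<inter> (B - A)) ` interval A B = Pow (B - A)"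
    by (rule inj_onto_Pow[OF finB AB inj]) auto
  then obtain V where V: "V \<in> interval A B" "outmap Ori U W V \<inter> (B - A) = {}"
    by (metis (no_types, lifting) Pow_bottom imageE)
  show "\<exists>!V. is_sink_in_face Ori A B V"
  proof (rule ex1I)
    show "is_sink_in_face Ori A B V" using sink_iff[OF assms UA AB BW V(1)] V by simp
    fix V' assume s: "is_sink_in_face Ori A B V'"
    then have V': "V' \<in> interval A B" by (simp add: is_sink_in_face_def)
    then have "outmap Ori U W V' \<inter> (B - A) = {}" using sink_iff[OF assms UA AB BW V'] s by simp
    then show "V' = V" using inj V V' by (auto simp: inj_on_def)
  qed
qed

end
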